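(* Assume the standing setting and hypothesis (H) below. Let $y\in S$ and let $z\in\mathcal{X}$ be its $\varepsilon$-representative. Then for every pattern $\pi\in U^k$ and every $t\in[0,k\tau]$, $$\|Y^{\pi}_{t,y}-\tilde{Y}^{\pi}_{t,z}\|\le\varepsilon.$$
   Context: Setting. Fix integers $M,k\ge1$, reals $L>0$, $\sigma>0$, $\tau>0$, $\varepsilon>0$; $h=L/(M+1)$, $S=[0,1]^M$, Euclidean norm $\|\cdot\|$ and inner product $\langle\cdot,\cdot\rangle$. $\mathcal{L}_h=\frac1{h^2}\mathrm{tridiag}(1,-2,1)$ ($M\times M$). $U\subset[0,1]^2$ is a finite set of modes; for $u=(u_0,u_L)$, $\varphi_h(u)=\frac1{h^2}(u_0,0,\dots,0,u_L)^\top$. A map $f:\mathbb{R}^M\to\mathbb{R}^M$ is given and $f_u(y)=\sigma\mathcal{L}_hy+\sigma\varphi_h(u)+f(y)$, assumed Lipschitz on $S$ with constant $L_u$. $\lambda_u$ is the OSL constant of $f_u$ on $S$ (smallest constant with $\langle f_u(y_1)-f_u(y_2),y_1-y_2\rangle\le\lambda_u\|y_1-y_2\|^2$ for all $y_1,y_2\in S$), and $C_u=\sup_{y\in S}L_u\|f_u(y)\|$. Trajectories. For a pattern $\pi=u_k\cdots u_1\in U^k$ and $y\in S$, $Y^\pi_{t,y}$ ($t\in[0,k\tau]$) is the continuous solution of $dy/dt=f_{u_k}(y)$ on $[0,\tau)$ with $Y^\pi_{0,y}=y$, continued by the solution of $dy/dt=f_{u_{k-1}}(y)$ on $[\tau,2\tau)$,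 and so on up to $f_{u_1}$ on $[(k-1)\tau,k\tau]$. The Euler image is $\tilde Y^u_{t,z}=z+tf_u(z)$ for $t\in[0,\tau]$, and for a pattern $\tilde Y^\pi_{t,z}=\tilde Y^{u_k}_{t,z}$ for $t\in[0,\tau]$ and $\tilde Y^{\pi}_{t,z}=\tilde Y^{u_{k-1}\cdots u_1}_{t-\tau,\tilde Y^{u_k}_{\tau,z}}$ for $t\in[\tau,k\tau]$. It is assumed that all these exact and Euler trajectories remain in $S$. Grid. $K$ is an integer with $K\ge\sqrt{M}/(2\varepsilon)$; $[0,1]$ is split into $K$ equal subintervals, hence $S$ into $K^M$ equal cubic cells; $\mathcal{X}$ is the set of cell centers. The $\varepsilon$-representative of $y\in S$ is the center of a (fixed choice of) cell containing $y$, so $\|y-z\|\le\varepsilon$. Hypothesis (H). For each $u\in U$ let $G_u=\sqrt3\,\varepsilon|\lambda_u|/C_u$ and $\alpha_u=1+\frac{|\lambda_u|G_u}{4}-\sqrt{1+(\lambda_uG_u/4)^2}$. (H) requires, for all $u\in U$: $\lambda_u<0$, $\frac{|\lambda_u|G_u}{4}<1$, and $\tau\le G_u(1-\alpha_u)$. *)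

theory Defs
  imports "HOL-Analysis.Analysis"
begin

text \<open>State space R^M is modelled as real^'n with 'n a finite linearly ordered index type,
  M = CARD('n). The linear order of 'n gives the ordering of the grid nodes 1..M.\<close>

definition unit_cube :: "(real^'n) set" where
  "unit_cube = {x. \<forall>i. 0 \<le> x$i \<and> x$i \<le> 1}"

definition mesh :: "real \<Rightarrow> 'n::finite itself \<Rightarrow> real" where
  "mesh L _ = L / (real CARD('n) + 1)"

definition prev_val :: "real^'n::{finite,linorder} \<Rightarrow> 'n \<Rightarrow> real" where
  "prev_val y i = (if \<exists>j. j < i then y $ (Max {j. j < i}) else 0)"

definition next_val :: "real^'n::{finite,linorder} \<Rightarrow> 'n \<Rightarrow> real" where
  "next_val y i = (if \<exists>j. i < j then y $ (Min {j. i < j}) else 0)"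

definition lap_h :: "real \<Rightarrow> real^'n::{finite,linorder} \<Rightarrow> real^'n::{finite,linorder}" where
  "lap_h h y = (\<chi> i. (prev_val y i - 2 * y$i + next_val y i) / h^2)"

definition phi_h :: "real \<Rightarrow> real \<times> real \<Rightarrow> real^'n::{finite,linorder}" where
  "phi_h h u = (\<chi> i. ((if i = Min UNIV then fst u else 0) + (if i = Max UNIV then snd u else 0)) / h^2)"

definition f_mode :: "real \<Rightarrow> real \<Rightarrow> (real^'n::{finite,linorder} \<Rightarrow> real^'n::{finite,linorder}) \<Rightarrow> real \<times> real \<Rightarrow> real^'n::{finite,linorder} \<Rightarrow> real^'n::{finite,linorder}" where
  "f_mode L \<sigma> f u y = \<sigma> *\<^sub>R lap_h (mesh L TYPE('n)) y + \<sigma> *\<^sub>R phi_h (mesh L TYPE('n)) u + f y"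

text \<open>One-sided Lipschitz constant: smallest lambda with
  <F a - F b, a - b> <= lambda |a - b|^2 on S.\<close>
definition osl_const :: "('a::real_inner \<Rightarrow> 'a) \<Rightarrow> 'a set \<Rightarrow> real" where
  "osl_const F S = Sup {inner (F a - F b) (a - b) / (norm (a - b))^2 | a b. a \<in> S \<and> b \<in> S \<and> a \<noteq> b}"

text \<open>Euler image along a pattern, the pattern given as list [u_k, ..., u_1]
  (head applied first, on [0,tau]).\<close>
fun euler_pat :: "('u \<Rightarrow> 'a::real_vector \<Rightarrow> 'a) \<Rightarrow> real \<Rightarrow> 'u list \<Rightarrow> 'a \<Rightarrow> real \<Rightarrow> 'a" where
  "euler_pat F \<tau> [] z t = z"
| "euler_pat F \<tau> (u # us) z t =
     (if t \<le> \<tau> then z + t *\<^sub>R F u z else euler_pat F \<tau> us (z + \<tau> *\<^sub>R F u z) (t - \<tau>))"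

definition is_pattern_traj :: "('u \<Rightarrow> 'a::real_normed_vector \<Rightarrow> 'a) \<Rightarrow> real \<Rightarrow> 'u list \<Rightarrow> 'a \<Rightarrow> (real \<Rightarrow> 'a) \<Rightarrow> bool" where
  "is_pattern_traj F \<tau> ps y Y \<longleftrightarrow>
     continuous_on {0 .. real (length ps) * \<tau>} Y \<and> Y 0 = y \<and>
     (\<forall>j < length ps. \<forall>t \<in> {real j * \<tau> ..< real (Suc j) * \<tau>}.
        (Y has_vector_derivative F (ps ! j) (Y t)) (at t within {real j * \<tau> .. real (Suc j) * \<tau>}))"

definition cell_centers :: "nat \<Rightarrow> (real^'n::finite) set" where
  "cell_centers K = {x. \<forall>i. \<exists>m::nat. m < K \<and> x$i = (2 * real m + 1) / (2 * real K)}"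

definition in_cell :: "nat \<Rightarrow> real^'n::finite \<Rightarrow> real^'n \<Rightarrow> bool" where
  "in_cell K c y \<longleftrightarrow> (\<forall>i. c$i - 1 / (2 * real K) \<le> y$i \<and> y$i \<le> c$i + 1 / (2 * real K))"

definition eps_representative :: "nat \<Rightarrow> real^'n::finite \<Rightarrow> real^'n \<Rightarrow> bool" where
  "eps_representative K y z \<longleftrightarrow> z \<in> cell_centers K \<and> in_cell K z y"

end

theory Submission
  imports Defs
begin


lemma inner_self_deriv:
  fixes e :: "real \<Rightarrow> 'a::real_inner"
  assumes "(e has_vector_derivative D) (at s)"
  shows "((\<lambda>x. inner (e x) (e x)) has_field_derivative (2 * inner (e s) D)) (at s)"
proof -
  have "(e has_derivative (\<lambda>h. h *\<^sub>R D)) (at s)" using assms by (simp add: has_vector_derivative_def)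
  from has_derivative_inner[OF this this]
  have "((\<lambda>x. inner (e x) (e x)) has_derivative (\<lambda>h. inner (e s) (h *\<^sub>R D) + inner (h *\<^sub>R D) (e s))) (at s)" .
  moreover have "(\<lambda>h. inner (e s) (h *\<^sub>R D) + inner (h *\<^sub>R D) (e s)) = (*) (2 * inner (e s) D)"
    by (auto simp: fun_eq_iff inner_commute algebra_simps)
  ultimately show ?thesis by (simp add: has_field_derivative_def)
qed

lemma one_step:
  fixes F :: "'a::real_inner \<Rightarrow> 'a"
  assumes osl: "\<And>a b. a \<in> S \<Longrightarrow> b \<in> S \<Longrightarrow> inner (F a - F b) (a - b) \<le> - mu * (norm (a - b))^2"
    and lip: "\<And>a b. a \<in> S \<Longrightarrow> b \<in> S \<Longrightarrow> norm (F a - F b) \<le> Lc * norm (a - b)"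
    and Cb: "Lc * norm (F z0) \<le> C"
    and mu: "mu > 0" and eps: "ep > 0"
    and bar: "\<And>t. 0 \<le> t \<Longrightarrow> t \<le> \<tau> \<Longrightarrow> ep^2 * mu^2 * t^2 / 2 + C^2 * t^3 / (3 * mu) \<le> ep^2 * mu * t"
    and init: "norm (Y 0 - z0) \<le> ep"
    and cont: "continuous_on {0..\<tau>} Y"
    and der: "\<And>t. 0 < t \<Longrightarrow> t < \<tau> \<Longrightarrow> (Y has_vector_derivative F (Y t)) (at t)"
    and inS: "\<And>t. 0 \<le> t \<Longrightarrow> t \<le> \<tau> \<Longrightarrow> Y t \<in> S \<and> z0 + t *\<^sub>R F z0 \<in> S"
    and t: "0 \<le> t" "t \<le> \<tau>"
  shows "norm (Y t - (z0 + t *\<^sub>R F z0)) \<le> ep"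
proof -
  define e where "e s = Y s - (z0 + s *\<^sub>R F z0)" for s
  define v where "v s = inner (e s) (e s)" for s
  define B where "B s = ep^2 * (1 - mu * s + mu^2 * s^2 / 2) + C^2 * s^3 / (3 * mu)" for s
  define h where "h s = exp (mu * s) * (v s - B s)" for s
  have contv: "continuous_on {0..\<tau>} h"
    unfolding h_def v_def e_def B_def
    using mu by (intro continuous_intros cont) auto
  have hder: "\<exists>y. DERIV h s :> y \<and> y \<le> 0" if s: "0 < s" "s < \<tau>" for s
  proof -
    have de: "(e has_vector_derivative (F (Y s) - F z0)) (at s)"
      unfolding e_def using der[OF s]
      by (auto intro!: derivative_eq_intros)
    have dv: "(v has_field_derivative (2 * inner (e s) (F (Y s) - F z0))) (at s)"
      unfolding v_def by (rule inner_self_deriv[OF de])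
    have dB: "(B has_field_derivative (ep^2 * (- mu + mu^2 * s) + C^2 * s^2 / mu)) (at s)"
      unfolding B_def using mu
      by (auto intro!: derivative_eq_intros simp: field_simps power2_eq_square power3_eq_cube)
    have dh: "(h has_field_derivative (exp (mu * s) * (mu * (v s - B s) + (2 * inner (e s) (F (Y s) - F z0)) - (ep^2 * (- mu + mu^2 * s) + C^2 * s^2 / mu)))) (at s)"
      unfolding h_def
      by (auto intro!: derivative_eq_intros dv dB simp: algebra_simps)
    have key: "2 * inner (e s) (F (Y s) - F z0) \<le> - mu * v s + C^2 * s^2 / mu"
    proof -
      define Z where "Z = z0 + s *\<^sub>R F z0"
      have es: "e s = Y s - Z" by (simp add: e_def Z_def)
      have YS: "Y s \<in> S" and ZS: "Z \<in> S" using inS[of s] s unfolding Z_def by auto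
      have z0S: "z0 \<in> S" using inS[of 0] s by auto
      have i1: "inner (e s) (F (Y s) - F Z) \<le> - mu * (norm (e s))^2"
        using osl[OF YS ZS] by (simp add: es inner_commute)
      have "inner (e s) (F Z - F z0) \<le> norm (e s) * norm (F Z - F z0)"
        by (rule norm_cauchy_schwarz)
      also have "norm (F Z - F z0) \<le> Lc * norm (Z - z0)" by (rule lip[OF ZS z0S])
      also have "Lc * norm (Z - z0) = s * (Lc * norm (F z0))" using s by (simp add: Z_def)
      also have "\<dots> \<le> s * C" using s Cb by (intro mult_left_mono) auto
      finally have i2: "inner (e s) (F Z - F z0) \<le> norm (e s) * (s * C)"
        by (simp add: mult_left_mono)
      have split: "inner (e s) (F (Y s) - F z0) = inner (e s) (F (Y s) - F Z) + inner (e s) (F Z - F z0)"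
        by (simp add: inner_diff_right)
      have sq: "0 \<le> (mu * norm (e s) - s * C)^2" by simp
      have "2 * (- mu * (norm (e s))^2 + norm (e s) * (s * C)) \<le> - mu * (norm (e s))^2 + C^2 * s^2 / mu"
      proof -
        have "mu * (2 * (- mu * (norm (e s))^2 + norm (e s) * (s * C))) \<le> mu * (- mu * (norm (e s))^2) + C^2 * s^2"
          using sq by (simp add: power2_eq_square algebra_simps)
        then show ?thesis using mu by (simp add: field_simps)
      qed
      then show ?thesis using i1 i2 split by (simp add: v_def power2_norm_eq_inner)
    qed
    have "mu * (v s - B s) + (2 * inner (e s) (F (Y s) - F z0)) - (ep^2 * (- mu + mu^2 * s) + C^2 * s^2 / mu)
        \<le> - mu * B s - ep^2 * (- mu + mu^2 * s)" using key by (simp add: right_diff_distrib)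
    also have "\<dots> = - (ep^2 * mu^3 * s^2 / 2 + C^2 * s^3 / 3)"
      using mu by (simp add: B_def field_simps power2_eq_square power3_eq_cube)
    also have "\<dots> \<le> 0"
    proof -
      have "0 \<le> ep^2 * mu^3 * s^2 / 2" using mu by simp
      moreover have "0 \<le> C^2 * s^3 / 3" using s by simp
      ultimately show ?thesis by linarith
    qed
    finally have "mu * (v s - B s) + (2 * inner (e s) (F (Y s) - F z0)) - (ep^2 * (- mu + mu^2 * s) + C^2 * s^2 / mu) \<le> 0" .
    then show ?thesis using dh by (intro exI[of _ "_ * _"] conjI) (auto simp: mult_nonneg_nonpos)
  qed
  have "h t \<le> h 0"
  proof (rule DERIV_nonpos_imp_decreasing_open[of 0 t h])
    show "continuous_on {0..t} h" using t by (intro continuous_on_subset[OF contv]) auto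
      show "0 \<le> t" using t by simp
    show "\<exists>y. DERIV h x :> y \<and> y \<le> 0" if "0 < x" "x < t" for x using hder that t by simp
  qed
  also have "h 0 \<le> 0"
  proof -
    have "(norm (Y 0 - z0))^2 \<le> ep^2" using init by (intro power_mono) auto
    then show ?thesis by (simp add: h_def v_def e_def B_def power2_norm_eq_inner)
  qed
  finally have ht: "h t \<le> 0" .
  have "v t - B t = h t / exp (mu * t)" by (simp add: h_def)
  also have "\<dots> \<le> 0" using ht by (intro divide_nonpos_pos) auto
  finally have "v t \<le> B t" by simp
  also have "B t \<le> ep^2"
  proof -
    have "B t = ep^2 + (ep^2 * mu^2 * t^2 / 2 + C^2 * t^3 / (3 * mu) - ep^2 * mu * t)"
      unfolding B_def by (simp add: ring_distribs mult_ac)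
    then show ?thesis using bar[OF t] by linarith
  qed
  finally have n2: "(norm (e t))^2 \<le> ep^2" by (simp add: v_def power2_norm_eq_inner)
  have "0 \<le> ep" using eps by simp
  with n2 have "norm (e t) \<le> ep" by (rule power2_le_imp_le)
  then show ?thesis by (simp add: e_def)
qed
lemma euler_pat_0: "\<tau> \<ge> 0 \<Longrightarrow> euler_pat F \<tau> ps z 0 = z"
  by (cases ps) auto

lemma pattern:
  fixes F :: "'u \<Rightarrow> 'a::real_normed_vector \<Rightarrow> 'a"
  assumes tau: "\<tau> > 0"
    and step: "\<And>u z0 Y t. u \<in> U \<Longrightarrow> norm (Y 0 - z0) \<le> ep \<Longrightarrow> continuous_on {0..\<tau>} Y \<Longrightarrow>
      (\<And>t. 0 < t \<Longrightarrow> t < \<tau> \<Longrightarrow> (Y has_vector_derivative F u (Y t)) (at t)) \<Longrightarrow>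
      (\<And>t. 0 \<le> t \<Longrightarrow> t \<le> \<tau> \<Longrightarrow> Y t \<in> S \<and> z0 + t *\<^sub>R F u z0 \<in> S) \<Longrightarrow>
      0 \<le> t \<Longrightarrow> t \<le> \<tau> \<Longrightarrow> norm (Y t - (z0 + t *\<^sub>R F u z0)) \<le> ep"
  shows "set ps \<subseteq> U \<Longrightarrow> norm (Y 0 - z) \<le> ep \<Longrightarrow> continuous_on {0..real (length ps) * \<tau>} Y \<Longrightarrow>
    (\<forall>j < length ps. \<forall>t. real j * \<tau> < t \<and> t < real (Suc j) * \<tau> \<longrightarrow> (Y has_vector_derivative F (ps ! j) (Y t)) (at t)) \<Longrightarrow>
    (\<forall>s \<in> {0..real (length ps) * \<tau>}. Y s \<in> S) \<Longrightarrow>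
    (\<forall>s \<in> {0..real (length ps) * \<tau>}. euler_pat F \<tau> ps z s \<in> S) \<Longrightarrow>
    t \<in> {0..real (length ps) * \<tau>} \<Longrightarrow> norm (Y t - euler_pat F \<tau> ps z t) \<le> ep"
proof (induction ps arbitrary: Y z t)
  case Nil
  then show ?case by simp
next
  case (Cons u us)
  let ?n = "real (length us)"
  have uU: "u \<in> U" using Cons.prems by simp
  have len: "real (length (u # us)) * \<tau> = \<tau> + ?n * \<tau>" by (simp add: algebra_simps)
  have n0: "0 \<le> ?n * \<tau>" using tau by simp
  have len': "(1 + ?n) * \<tau> = \<tau> + ?n * \<tau>" by (simp add: algebra_simps)
  have contY: "continuous_on {0..\<tau>} Y"
    using n0 by (intro continuous_on_subset[OF Cons.prems(3)]) (auto simp: len len')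
  have derY: "(Y has_vector_derivative F u (Y t)) (at t)" if "0 < t" "t < \<tau>" for t
    using Cons.prems(4)[rule_format, of 0 t] that by simp
  have memY: "Y t \<in> S \<and> z + t *\<^sub>R F u z \<in> S" if "0 \<le> t" "t \<le> \<tau>" for t
  proof -
    have "t \<le> \<tau> + ?n * \<tau>" using that n0 by linarith
    then have "t \<in> {0..real (length (u # us)) * \<tau>}" using that by (simp add: len len')
    then have "Y t \<in> S" "euler_pat F \<tau> (u # us) z t \<in> S" using Cons.prems(5,6) by blast+
    then show ?thesis using that by simp
  qed
  have stepY: "norm (Y t - (z + t *\<^sub>R F u z)) \<le> ep" if "0 \<le> t" "t \<le> \<tau>" for t
    by (rule step[OF uU Cons.prems(2) contY derY memY that]) auto
  show ?case
  proof (cases "t \<le> \<tau>")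
    case True
    then show ?thesis using stepY[of t] Cons.prems(7) by auto
  next
    case False
    define Y' where "Y' s = Y (s + \<tau>)" for s
    define z1 where "z1 = z + \<tau> *\<^sub>R F u z"
    have Y'eq: "Y' = (\<lambda>s. Y (s + \<tau>))" by (simp add: fun_eq_iff Y'_def)
    have eul: "euler_pat F \<tau> (u # us) z t = euler_pat F \<tau> us z1 (t - \<tau>)"
      using False by (simp add: z1_def)
    have "norm (Y' (t - \<tau>) - euler_pat F \<tau> us z1 (t - \<tau>)) \<le> ep"
    proof (rule Cons.IH)
      show "set us \<subseteq> U" using Cons.prems by simp
      show "norm (Y' 0 - z1) \<le> ep" using stepY[of \<tau>] tau by (simp add: Y'_def z1_def)
      show "continuous_on {0..?n * \<tau>} Y'"
        unfolding Y'_def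
        by (rule continuous_on_compose2[OF Cons.prems(3)]) (use tau in \<open>auto intro!: continuous_intros simp: len len'\<close>)
      show "\<forall>j<length us. \<forall>t. real j * \<tau> < t \<and> t < real (Suc j) * \<tau> \<longrightarrow> (Y' has_vector_derivative F (us ! j) (Y' t)) (at t)"
      proof (intro allI impI)
        fix j t assume j: "j < length us" and tj: "real j * \<tau> < t \<and> t < real (Suc j) * \<tau>"
        have "(Y has_vector_derivative F ((u # us) ! Suc j) (Y (t + \<tau>))) (at (t + \<tau>))"
        proof -
          have "real (Suc j) * \<tau> < t + \<tau> \<and> t + \<tau> < real (Suc (Suc j)) * \<tau>"
            using tj by (simp add: distrib_right)
          then show ?thesis using Cons.prems(4)[rule_format, of "Suc j" "t + \<tau>"] j by simp
        qed
        moreover have "((\<lambda>s. s + \<tau>) has_vector_derivative 1) (at t)"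
          by (auto intro!: derivative_eq_intros)
        ultimately have "((Y \<circ> (\<lambda>s. s + \<tau>)) has_vector_derivative (1 *\<^sub>R F ((u # us) ! Suc j) (Y (t + \<tau>)))) (at t)"
          by (intro vector_diff_chain_at) auto
        then show "(Y' has_vector_derivative F (us ! j) (Y' t)) (at t)"
          by (simp add: Y'eq o_def)
      qed
      have shift: "s + \<tau> \<in> {0..real (length (u # us)) * \<tau>}" if "s \<in> {0..?n * \<tau>}" for s
      proof -
        have "0 \<le> s + \<tau> \<and> s + \<tau> \<le> \<tau> + ?n * \<tau>" using that tau by auto
        then show ?thesis by (simp only: len atLeastAtMost_iff)
      qed
      show "\<forall>s\<in>{0..?n * \<tau>}. Y' s \<in> S" using Cons.prems(5) shift unfolding Y'_def by blast
      show "\<forall>s\<in>{0..?n * \<tau>}. euler_pat F \<tau> us z1 s \<in> S"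
      proof
        fix s assume s: "s \<in> {0..?n * \<tau>}"
        have "euler_pat F \<tau> (u # us) z (s + \<tau>) \<in> S" using Cons.prems(6) shift[OF s] by blast
        moreover have "euler_pat F \<tau> (u # us) z (s + \<tau>) = euler_pat F \<tau> us z1 s"
          using tau s by (cases "s = 0") (auto simp: z1_def euler_pat_0 len')
        ultimately show "euler_pat F \<tau> us z1 s \<in> S" by simp
      qed
      have "t \<le> \<tau> + ?n * \<tau>" using Cons.prems(7) by (simp only: len atLeastAtMost_iff)
      then show "t - \<tau> \<in> {0..?n * \<tau>}" using False by auto
    qed
    then show ?thesis using eul by (simp add: Y'_def)
  qed
qed



lemma bar_lemma:
  fixes mu ep C G \<tau> t :: real
  assumes mu: "mu > 0" and ep: "ep > 0" and tau: "\<tau> > 0" and G: "G = sqrt 3 * ep * mu / C"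
    and tauG: "\<tau> \<le> G * (sqrt (1 + (mu * G / 4)^2) - mu * G / 4)" and t: "0 \<le> t" "t \<le> \<tau>"
  shows "ep^2 * mu^2 * t^2 / 2 + C^2 * t^3 / (3 * mu) \<le> ep^2 * mu * t"
proof -
  define a where "a = mu * G / 4"
  define s where "s = sqrt (1 + a^2)"
  have sa: "s > a"
  proof -
    have "a < sqrt (1 + a^2)" by (rule real_less_rsqrt) simp
    then show ?thesis by (simp add: s_def)
  qed
  have "0 < G * (s - a)" using tau tauG by (simp add: a_def s_def)
  then have G0: "G > 0" using sa by (simp add: zero_less_mult_iff)
  have C0: "C > 0"
  proof (rule ccontr)
    assume "\<not> C > 0"
    then have "sqrt 3 * ep * mu / C \<le> 0" using mu ep by (simp add: divide_nonneg_nonpos)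
    then show False using G G0 by simp
  qed
  have CG: "C = sqrt 3 * ep * mu / G" using G G0 C0 by (simp add: field_simps)
  have C2: "C^2 = 3 * ep^2 * mu^2 / G^2" unfolding CG by (simp add: power_divide power_mult_distrib)
  define r where "r = t / G"
  have r0: "r \<ge> 0" using t G0 by (simp add: r_def)
  have "t \<le> G * (s - a)" using t tauG by (simp add: a_def s_def)
  then have rle: "r \<le> s - a" using G0 by (simp add: r_def field_simps)
  have a0: "a > 0" using mu G0 by (simp add: a_def)
  have "(r + a)^2 \<le> s^2" using r0 a0 rle by (intro power_mono) auto
  also have "s^2 = 1 + a^2" by (simp add: s_def)
  finally have key: "2 * a * r + r^2 \<le> 1" by (simp add: power2_eq_square algebra_simps)
  have tr: "t = G * r" using G0 by (simp add: r_def)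
  have "ep^2 * mu^2 * t^2 / 2 + C^2 * t^3 / (3 * mu) = ep^2 * mu * t * (2 * a * r + r^2)"
    unfolding C2 using G0 mu by (simp add: tr a_def field_simps power2_eq_square power3_eq_cube)
  also have "\<dots> \<le> ep^2 * mu * t * 1"
    using key ep mu t by (intro mult_left_mono) auto
  finally show ?thesis by simp
qed

lemma init_lemma:
  fixes y z :: "real^'n::finite" and K :: nat and ep :: real
  assumes ep: "ep > 0" and K: "real K \<ge> sqrt (real CARD('n)) / (2 * ep)"
    and cell: "in_cell K z y"
  shows "norm (y - z) \<le> ep"
proof -
  have K0: "real K > 0"
  proof -
    have "sqrt (real CARD('n)) / (2 * ep) > 0" using ep by simp
    then show ?thesis using K by linarith
  qed
  have comp: "\<bar>(y - z) $ i\<bar> \<le> 1 / (2 * real K)" for i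
  proof -
    have "z$i - 1 / (2 * real K) \<le> y$i \<and> y$i \<le> z$i + 1 / (2 * real K)"
      using cell unfolding in_cell_def by blast
    then show ?thesis by (simp add: abs_le_iff)
  qed
  have "(\<Sum>i\<in>UNIV. (norm ((y - z) $ i))^2) \<le> (\<Sum>i\<in>(UNIV::'n set). (1 / (2 * real K))^2)"
    using comp by (intro sum_mono power_mono) auto
  also have "\<dots> = real CARD('n) * (1 / (2 * real K))^2" by simp
  finally have "norm (y - z) \<le> sqrt (real CARD('n) * (1 / (2 * real K))^2)"
    unfolding norm_vec_def L2_set_def by (rule real_sqrt_le_mono)
  also have "\<dots> = sqrt (real CARD('n)) / (2 * real K)" using K0 by (simp add: real_sqrt_mult)
  also have "\<dots> \<le> ep"
  proof -
    have "sqrt (real CARD('n)) \<le> real K * (2 * ep)" using K ep by (simp add: pos_divide_le_eq)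
    then show ?thesis using K0 by (simp add: pos_divide_le_eq mult_ac)
  qed
  finally show ?thesis .
qed



theorem theorem1:
  fixes f :: "real^'n::{finite,linorder} \<Rightarrow> real^'n::{finite,linorder}"
    and U :: "(real \<times> real) set"
    and Lc :: "real \<times> real \<Rightarrow> real"
    and L \<sigma> \<tau> \<epsilon> :: real
    and k K :: nat
    and y z :: "real^'n::{finite,linorder}"
    and ps :: "(real \<times> real) list"
    and Y :: "real \<Rightarrow> real^'n::{finite,linorder}"
    and t :: real
  defines "fu \<equiv> f_mode L \<sigma> f"
  defines "lam \<equiv> (\<lambda>u. osl_const (fu u) unit_cube)"
  defines "C \<equiv> (\<lambda>u. SUP x\<in>unit_cube. Lc u * norm (fu u x))"
  defines "G \<equiv> (\<lambda>u. sqrt 3 * \<epsilon> * \<bar>lam u\<bar> / C u)"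
  defines "\<alpha> \<equiv> (\<lambda>u. 1 + \<bar>lam u\<bar> * G u / 4 - sqrt (1 + (lam u * G u / 4)^2))"
  assumes "k \<ge> 1" and "L > 0" and "\<sigma> > 0" and "\<tau> > 0" and "\<epsilon> > 0"
    and "finite U" and "U \<subseteq> {0..1} \<times> {0..1}"
    and "\<And>u. u \<in> U \<Longrightarrow> (Lc u)-lipschitz_on unit_cube (fu u)"
    and "real K \<ge> sqrt (real CARD('n::{finite,linorder})) / (2 * \<epsilon>)"
    and H: "\<And>u. u \<in> U \<Longrightarrow> lam u < 0 \<and> \<bar>lam u\<bar> * G u / 4 < 1 \<and> \<tau> \<le> G u * (1 - \<alpha> u)"
    and "y \<in> unit_cube" and "eps_representative K y z"
    and "length ps = k" and "set ps \<subseteq> U"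
    and "is_pattern_traj fu \<tau> ps y Y"
    and "\<forall>s \<in> {0 .. real k * \<tau>}. Y s \<in> unit_cube"
    and "\<forall>s \<in> {0 .. real k * \<tau>}. euler_pat fu \<tau> ps z s \<in> unit_cube"
    and "t \<in> {0 .. real k * \<tau>}"
  shows "norm (Y t - euler_pat fu \<tau> ps z t) \<le> \<epsilon>"
proof -
  note lipU = assms(13) and Kbd = assms(14) and H = assms(15)
  have tau: "\<tau> > 0" and eps: "\<epsilon> > 0" using assms(9,10) by auto
  have lipn: "norm (fu u a - fu u b) \<le> Lc u * norm (a - b)" if "u \<in> U" "a \<in> unit_cube" "b \<in> unit_cube" for u a b
    using lipschitz_on_normD[OF lipU[OF that(1)] that(2,3)] .
  have oslU: "inner (fu u a - fu u b) (a - b) \<le> lam u * (norm (a - b))^2"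
    if u: "u \<in> U" and ab: "a \<in> unit_cube" "b \<in> unit_cube" for u a b
  proof (cases "a = b")
    case True then show ?thesis by simp
  next
    case False
    define Q where "Q = {inner (fu u a - fu u b) (a - b) / (norm (a - b))^2 | a b. a \<in> unit_cube \<and> b \<in> unit_cube \<and> a \<noteq> b}"
    have bdd: "bdd_above Q"
    proof (rule bdd_aboveI[where M = "Lc u"])
      fix q assume "q \<in> Q"
      then obtain a b where q: "q = inner (fu u a - fu u b) (a - b) / (norm (a - b))^2"
        and ab: "a \<in> unit_cube" "b \<in> unit_cube" "a \<noteq> b" unfolding Q_def by blast
      have "inner (fu u a - fu u b) (a - b) \<le> norm (fu u a - fu u b) * norm (a - b)"
        by (rule norm_cauchy_schwarz)
      also have "\<dots> \<le> Lc u * norm (a - b) * norm (a - b)"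
        using lipn[OF u ab(1,2)] by (intro mult_right_mono) auto
      finally have "inner (fu u a - fu u b) (a - b) \<le> Lc u * (norm (a - b))^2"
        by (simp add: power2_eq_square mult_ac)
      moreover have "(norm (a - b))^2 > 0" using ab(3) by simp
      ultimately show "q \<le> Lc u" unfolding q by (simp add: divide_le_eq)
    qed
    have qin: "inner (fu u a - fu u b) (a - b) / (norm (a - b))^2 \<in> Q"
      unfolding Q_def using ab False by blast
    have "inner (fu u a - fu u b) (a - b) / (norm (a - b))^2 \<le> Sup Q"
      by (rule cSup_upper[OF qin bdd])
    also have "Sup Q = lam u" unfolding Q_def assms(2) osl_const_def by simp
    finally have "inner (fu u a - fu u b) (a - b) / (norm (a - b))^2 \<le> lam u" .
    moreover have "(norm (a - b))^2 > 0" using False by simp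
    ultimately show ?thesis by (simp add: divide_le_eq)
  qed
  have Cb: "Lc u * norm (fu u x) \<le> C u" if u: "u \<in> U" and x: "x \<in> unit_cube" for u x
  proof -
    have Lc0: "Lc u \<ge> 0" using lipschitz_on_nonneg[OF lipU[OF u]] .
    have zS: "0 \<in> unit_cube" by (simp add: unit_cube_def)
    have nb: "norm w \<le> real CARD('n)" if "w \<in> unit_cube" for w :: "real^'n::{finite,linorder}"
    proof -
      have "norm w \<le> (\<Sum>i\<in>UNIV. \<bar>w $ i\<bar>)" by (rule norm_le_l1_cart)
      also have "\<dots> \<le> of_nat (card (UNIV::'n::{finite,linorder} set)) * 1"
        using that by (intro sum_bounded_above) (auto simp: unit_cube_def)
      finally show ?thesis by simp
    qed
    have bnd: "Lc u * norm (fu u w) \<le> Lc u * (norm (fu u 0) + Lc u * real CARD('n))" if "w \<in> unit_cube" for w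
    proof -
      have "norm (fu u w) \<le> norm (fu u 0) + norm (fu u w - fu u 0)" by (rule norm_triangle_sub)
      also have "norm (fu u w - fu u 0) \<le> Lc u * norm (w - 0)" by (rule lipn[OF u that zS])
      also have "Lc u * norm (w - 0) \<le> Lc u * real CARD('n)" using nb[OF that] Lc0 by (simp add: mult_left_mono)
      finally show ?thesis using Lc0 by (simp add: mult_left_mono)
    qed
    have "bdd_above ((\<lambda>w. Lc u * norm (fu u w)) ` unit_cube)"
      using bnd by (intro bdd_aboveI2) 
    then show ?thesis unfolding assms(3) by (intro cSUP_upper x)
  qed
  have step: "norm (Y t - (z0 + t *\<^sub>R fu u z0)) \<le> \<epsilon>"
    if u: "u \<in> U" and init: "norm (Y 0 - z0) \<le> \<epsilon>" and cont: "continuous_on {0..\<tau>} Y"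
      and der: "\<And>t. 0 < t \<Longrightarrow> t < \<tau> \<Longrightarrow> (Y has_vector_derivative fu u (Y t)) (at t)"
      and mem: "\<And>t. 0 \<le> t \<Longrightarrow> t \<le> \<tau> \<Longrightarrow> Y t \<in> unit_cube \<and> z0 + t *\<^sub>R fu u z0 \<in> unit_cube"
      and t: "0 \<le> t" "t \<le> \<tau>"
    for u z0 Y t
  proof -
    define mu where "mu = - lam u"
    have Hu: "lam u < 0" "\<tau> \<le> G u * (1 - \<alpha> u)" using H[OF u] by auto
    have mu: "mu > 0" using Hu by (simp add: mu_def)
    have absl: "\<bar>lam u\<bar> = mu" using Hu by (simp add: mu_def)
    have z0S: "z0 \<in> unit_cube" using mem[of 0] tau by simp
    have Gu: "G u = sqrt 3 * \<epsilon> * mu / C u" unfolding assms(4) absl ..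
    have sq: "(lam u * G u / 4)^2 = (mu * G u / 4)^2" by (simp add: mu_def power2_eq_square)
    have tauG: "\<tau> \<le> G u * (sqrt (1 + (mu * G u / 4)^2) - mu * G u / 4)"
      using Hu(2) unfolding assms(5) sq absl by (simp add: algebra_simps)
    show ?thesis
    proof (rule one_step[where S = unit_cube and F = "fu u" and mu = mu and Lc = "Lc u" and C = "C u" and ep = \<epsilon> and \<tau> = \<tau>])
      show "inner (fu u a - fu u b) (a - b) \<le> - mu * (norm (a - b))^2" if "a \<in> unit_cube" "b \<in> unit_cube" for a b
        using oslU[OF u that] by (simp add: mu_def)
      show "norm (fu u a - fu u b) \<le> Lc u * norm (a - b)" if "a \<in> unit_cube" "b \<in> unit_cube" for a b
        using lipn[OF u that] .
      show "Lc u * norm (fu u z0) \<le> C u" by (rule Cb[OF u z0S])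
      show "\<epsilon>^2 * mu^2 * s^2 / 2 + (C u)^2 * s^3 / (3 * mu) \<le> \<epsilon>^2 * mu * s" if "0 \<le> s" "s \<le> \<tau>" for s
        by (rule bar_lemma[OF mu eps tau Gu tauG that])
    qed (use mu eps init cont der mem t in auto)
  qed
  have yz: "norm (Y 0 - z) \<le> \<epsilon>"
  proof -
    have "Y 0 = y" using assms(20) by (simp add: is_pattern_traj_def)
    moreover have "in_cell K z y" using assms(17) by (simp add: eps_representative_def)
    ultimately show ?thesis using init_lemma[OF eps Kbd] by simp
  qed
  have traj: "continuous_on {0 .. real (length ps) * \<tau>} Y"
    "\<And>j t. j < length ps \<Longrightarrow> t \<in> {real j * \<tau> ..< real (Suc j) * \<tau>} \<Longrightarrow>
        (Y has_vector_derivative fu (ps ! j) (Y t)) (at t within {real j * \<tau> .. real (Suc j) * \<tau>})"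
    using assms(20) unfolding is_pattern_traj_def by blast+
  have derat: "\<forall>j < length ps. \<forall>t. real j * \<tau> < t \<and> t < real (Suc j) * \<tau> \<longrightarrow> (Y has_vector_derivative fu (ps ! j) (Y t)) (at t)"
  proof (intro allI impI)
    fix j t assume j: "j < length ps" and tj: "real j * \<tau> < t \<and> t < real (Suc j) * \<tau>"
    have "(Y has_vector_derivative fu (ps ! j) (Y t)) (at t within {real j * \<tau> .. real (Suc j) * \<tau>})"
      using traj(2)[OF j] tj by auto
    moreover have "at t within {real j * \<tau> .. real (Suc j) * \<tau>} = at t"
      using tj by (intro at_within_interior) (simp add: interior_atLeastAtMost_real)
    ultimately show "(Y has_vector_derivative fu (ps ! j) (Y t)) (at t)" by simp
  qed
  have pat: "norm (Y t - euler_pat fu \<tau> ps z t) \<le> \<epsilon>"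
    apply (rule pattern[where F = fu and U = U and ep = \<epsilon> and S = unit_cube and \<tau> = \<tau> and ps = ps and Y = Y and z = z and t = t])
    apply (rule tau)
    apply (rule step; assumption)
    using assms(18,19,21,22,23) yz traj(1) derat by simp_all
  then show ?thesis .
qed

end
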